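(* Let $R$ be a ring such that for every $x\in R$ there exists an integer $n=n(x)\ge 2$ with $xRx=x^{n}Rx^{n}$. Then $R$ is feckly clean.
   Context: Rings are associative with identity, not necessarily commutative; $J(R)$ is the Jacobson radical. An element $u\in R$ is full if $RuR=R$. An element $a\in R$ is feckly clean if there exist $e\in R$ and a full element $u\in R$ with $a=e+u$ and $eR(1-e)\subseteq J(R)$; $R$ is feckly clean if every element is feckly clean. *)

theory Defs
  imports Main
begin

definition left_ideal :: "'a::ring_1 set \<Rightarrow> bool" where
  "left_ideal I \<longleftrightarrow> 0 \<in> I \<and> (\<forall>a\<in>I. \<forall>b\<in>I. a + b \<in> I) \<and> (\<forall>a\<in>I. - a \<in> I)
     \<and> (\<forall>r. \<forall>a\<in>I. r * a \<in> I)"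

definition maximal_left_ideal :: "'a::ring_1 set \<Rightarrow> bool" where
  "maximal_left_ideal M \<longleftrightarrow> left_ideal M \<and> M \<noteq> UNIV \<and>
     (\<forall>I. left_ideal I \<and> M \<subseteq> I \<and> I \<noteq> UNIV \<longrightarrow> I = M)"

definition jacobson :: "'a::ring_1 set" where
  "jacobson = \<Inter> {M. maximal_left_ideal M}"

text \<open>RuR: the two-sided ideal generated by u, i.e. all finite sums of r*u*s.\<close>
definition RuR :: "'a::ring_1 \<Rightarrow> 'a set" where
  "RuR u = {sum_list (map (\<lambda>(r, s). r * u * s) ps) | ps. True}"

definition full :: "'a::ring_1 \<Rightarrow> bool" where
  "full u \<longleftrightarrow> RuR u = UNIV"

definition feckly_clean_elem :: "'a::ring_1 \<Rightarrow> bool" where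
  "feckly_clean_elem a \<longleftrightarrow> (\<exists>e u. full u \<and> a = e + u \<and>
      {e * r * (1 - e) | r. True} \<subseteq> jacobson)"

definition feckly_clean_ring :: "'a::ring_1 itself \<Rightarrow> bool" where
  "feckly_clean_ring _ \<longleftrightarrow> (\<forall>a::'a. feckly_clean_elem a)"

end

theory Submission
  imports Defs
begin

lemma sqzero_jac:
  fixes x :: "'a::ring_1"
  assumes xx: "\<And>t. x * t * x = 0"
  shows "x \<in> jacobson"
  unfolding jacobson_def
proof (rule InterI, simp)
  fix M :: "'a set" assume mM: "maximal_left_ideal M"
  hence li: "left_ideal M" and nu: "M \<noteq> UNIV"
    and mx: "\<And>I. left_ideal I \<Longrightarrow> M \<subseteq> I \<Longrightarrow> I \<noteq> UNIV \<Longrightarrow> I = M"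
    unfolding maximal_left_ideal_def by blast+
  show "x \<in> M"
  proof (rule ccontr)
    assume xn: "x \<notin> M"
    let ?I = "{m + t * x | m t. m \<in> M}"
    have "left_ideal ?I"
      unfolding left_ideal_def
    proof (intro conjI ballI allI)
      show "0 \<in> ?I" using li unfolding left_ideal_def
        by (metis (mono_tags, lifting) add_0 mem_Collect_eq mult_zero_left)
    next
      fix a b assume "a \<in> ?I" "b \<in> ?I"
      then obtain m1 t1 m2 t2 where "a = m1 + t1 * x" "m1 \<in> M" "b = m2 + t2 * x" "m2 \<in> M" by blast
      moreover have "m1 + m2 \<in> M" using li \<open>m1 \<in> M\<close> \<open>m2 \<in> M\<close> unfolding left_ideal_def by blast
      moreover have "a + b = (m1 + m2) + (t1 + t2) * x" using calculation by (simp add: algebra_simps)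
      ultimately show "a + b \<in> ?I" by blast
    next
      fix a assume "a \<in> ?I"
      then obtain m1 t1 where "a = m1 + t1 * x" "m1 \<in> M" by blast
      moreover have "- m1 \<in> M" using li \<open>m1 \<in> M\<close> unfolding left_ideal_def by blast
      moreover have "- a = (- m1) + (- t1) * x" using calculation by (simp add: algebra_simps)
      ultimately show "- a \<in> ?I" by blast
    next
      fix r a assume "a \<in> ?I"
      then obtain m1 t1 where "a = m1 + t1 * x" "m1 \<in> M" by blast
      moreover have "r * m1 \<in> M" using li \<open>m1 \<in> M\<close> unfolding left_ideal_def by blast
      moreover have "r * a = (r * m1) + (r * t1) * x" using calculation by (simp add: algebra_simps)
      ultimately show "r * a \<in> ?I" by blast
    qed
    moreover have "M \<subseteq> ?I"
    proof
      fix m assume "m \<in> M"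
      thus "m \<in> ?I" by (intro CollectI exI[of _ m] exI[of _ 0]) simp
    qed
    moreover have "x \<in> ?I"
    proof -
      have "0 \<in> M" using li unfolding left_ideal_def by blast
      thus ?thesis by (intro CollectI exI[of _ 0] exI[of _ 1]) simp
    qed
    ultimately have "?I = UNIV" using mx xn by blast
    hence "1 \<in> ?I" by simp
    then obtain m t where m: "m \<in> M" "1 = m + t * x" by auto
    have mm: "m = 1 - t * x" using m(2) by (simp add: algebra_simps)
    have "(1 + t * x) * m = 1 - t * (x * t * x)" unfolding mm
      by (simp add: algebra_simps)
    hence "(1 + t * x) * m = 1" using xx by simp
    moreover have "(1 + t * x) * m \<in> M" using li m(1) unfolding left_ideal_def by blast
    ultimately have "1 \<in> M" by simp
    hence "\<And>z. z \<in> M" using li unfolding left_ideal_def by (metis mult_1_right)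
    thus False using nu by blast
  qed
qed

theorem corollary4p2:
  assumes "\<forall>x::'a::ring_1. \<exists>n::nat. n \<ge> 2 \<and>
             {x * r * x | r. True} = {x ^ n * r * x ^ n | r. True}"
  shows "feckly_clean_ring TYPE('a)"
  unfolding feckly_clean_ring_def
proof
  have sq0: "x \<in> jacobson" if "x * x = 0" for x :: 'a
  proof (rule sqzero_jac)
    fix t
    obtain n where n: "n \<ge> 2" "{x * r * x | r. True} = {x ^ n * r * x ^ n | r. True}"
      using assms by blast
    have "x ^ n = x ^ 2 * x ^ (n - 2)" using n(1) by (metis le_add_diff_inverse power_add)
    hence "x ^ n = 0" using that by (simp add: power2_eq_square)
    have "x * t * x \<in> {x ^ n * r * x ^ n | r. True}" using n(2) by blast
    thus "x * t * x = 0" using \<open>x ^ n = 0\<close> by auto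
  qed
  fix a :: 'a
  obtain n where n: "n \<ge> 2" "{a * r * a | r. True} = {a ^ n * r * a ^ n | r. True}"
    using assms by blast
  have "a * 1 * a \<in> {a ^ n * r * a ^ n | r. True}" using n(2) by blast
  then obtain r where r: "a * a = a ^ n * r * a ^ n" by auto
  have an: "a ^ n = a * a * a ^ (n - 2)" "a ^ n = a ^ (n - 2) * (a * a)" using n(1)
    by (metis le_add_diff_inverse power_add power2_eq_square,
        metis le_add_diff_inverse2 power_add power2_eq_square)
  define s where "s = a ^ (n - 2) * r * a ^ (n - 2)"
  have reg: "a * a * s * (a * a) = a * a"
  proof -
    have "a * a * s * (a * a) = (a * a * a ^ (n - 2)) * r * (a ^ (n - 2) * (a * a))"
      unfolding s_def by (simp only: mult.assoc)
    also have "\<dots> = a ^ n * r * a ^ n" using an by simp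
    finally show ?thesis using r by simp
  qed
  define g where "g = a * a * s"
  have gg: "g * g = g" unfolding g_def using reg by (metis mult.assoc)
  have ga: "g * (a * a) = a * a" unfolding g_def using reg by simp
  define e where "e = 1 - g"
  define u where "u = a - e"
  have ee: "e * e = e" unfolding e_def using gg by (simp add: algebra_simps)
  have gu: "g * u = g * a" unfolding u_def e_def using gg by (simp add: algebra_simps)
  have eaa: "e * (a * a) = 0" unfolding e_def using ga by (simp add: algebra_simps)
  have eu: "e * u = e * a - e" unfolding u_def using ee by (simp add: algebra_simps)
  have k1: "z * g * u * (a * s) = z * g" for z
  proof -
    have "z * g * u * (a * s) = z * (g * u) * a * s" by (simp add: mult.assoc)
    also have "\<dots> = z * (g * a) * a * s" unfolding gu ..
    also have "\<dots> = z * (a * a * s * (a * a) * s)" unfolding g_def by (simp add: mult.assoc)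
    also have "\<dots> = z * g" using reg unfolding g_def by simp
    finally show ?thesis .
  qed
  have k2: "(- (z * e)) * u * a + (- (z * e)) * u * 1 = z * e" for z
  proof -
    have "(- (z * e)) * u * a + (- (z * e)) * u * 1 = - (z * ((e * u) * a + e * u))"
      by (simp add: algebra_simps)
    also have "(e * u) * a = - (e * a)" unfolding eu using eaa by (simp add: algebra_simps)
    finally show ?thesis unfolding eu by simp
  qed
  have full: "full u" unfolding full_def RuR_def
  proof (rule set_eqI, simp)
    fix z
    show "\<exists>ps. z = (\<Sum>(p, q)\<leftarrow>ps. p * u * q)"
      apply (rule exI[of _ "[(z * g, a * s), (- (z * e), a), (- (z * e), 1)]"])
      using k1[of z] k2[of z] unfolding e_def by (simp add: algebra_simps)
  qed
  have jac: "{e * t * (1 - e) | t. True} \<subseteq> jacobson"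
  proof clarify
    fix t
    have "(e * t * (1 - e)) * (e * t * (1 - e)) = e * t * ((1 - e) * e) * t * (1 - e)"
      by (simp add: mult.assoc)
    also have "(1 - e) * e = 0" using ee by (simp add: algebra_simps)
    finally show "e * t * (1 - e) \<in> jacobson" using sq0 by simp
  qed
  show "feckly_clean_elem a" unfolding feckly_clean_elem_def
    using full jac unfolding u_def by (intro exI[of _ e] exI[of _ u]) (simp add: u_def)
qed

end
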